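(* Assume that the super Poincaré inequality $$\mu(f^2)\le r\,\mathcal E(f)+\beta(r)\,\mu(|f|)^2,\qquad r>0,\ f\in\mathcal D(\mathcal E),$$ holds for some decreasing function $\beta:(0,\infty)\to(0,\infty)$. Then for any integers $n\ge1$, $k\ge1$ and any $f\in\mathcal A$, $$\mu_V(f^21_{\{\rho\ge n\}})\le 12\,\varepsilon_{n,k}(V)\,\mathcal E_V(f)+128\lambda\,\varepsilon_{n,k}(V)\,\mu_V(f^2)+96\,\zeta_n(V)\,\gamma_{n,k}\,\|f\|_\infty^2.$$
   Context: Setting: $(E,d)$ is a Polish space with Borel $\sigma$-field and a probability measure $\mu$. Let $q:E\times E\to[0,\infty)$ be measurable with $q(x,x)=0$ for all $x$, and $\lambda:=\sup_{x\in E}\int_E(1\wedge d(x,y)^2)q(x,y)\,\mu(\mathrm dy)<\infty.$ For bounded measurable $f,g$ set $\Gamma(f,g)(x)=\int_E(f(x)-f(y))(g(x)-g(y))q(x,y)\mu(\mathrm dy)$, $\Gamma(f)=\Gamma(f,f)$; $\mathcal A$ is the set of bounded measurable $f$ with $\Gamma(f)$ bounded, assumed dense in $L^2(\mu)$. $(\mathcal E,\mathcal D(\mathcal E))$ is the closure in $L^2(\mu)$ of $\mathcal E(f,g)=\mu(\Gamma(f,g))$ on $\mathcal A$, $\mathcal E(f)=\mathcal E(f,f)$. Fix $o\in E$, $\rho(x)=d(o,x)$. $V$ is measurable, bounded on each $\{\rho\le r\}$, with $\mu(e^V)=1$; $\mu_V=e^V\mu$; $\mathcal E_V(f)=\mu_V(\Gamma(f))$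 for $f\in\mathcal A$. $\|f\|_\infty$ is the uniform norm. Notation: $\beta^{-1}(s)=\inf\{r>0:\beta(r)\le s\}$; $K_{n,k}(V)=\sup_{\rho\le n+2}V-\inf_{\rho\le n+k+2}V$; $\varepsilon_{n,k}(V)=\sup_{m\ge n}\{\beta^{-1}(1/[2\mu(\rho>m-1)])e^{K_{m,k}(V)}\}$; $Z_n(V)=\sup_{\rho\le n+1}V$; $\zeta_n(V)=\sup_{m\ge n}\{\beta^{-1}(1/[2\mu(\rho>m-1)])e^{Z_{m+1}(V)}\}$ (suprema over integers $m\ge n$); $\gamma_{n,k}=\iint_{\{d(x,y)>k,\ \rho(y)\ge n-1\}}q(x,y)\mu(\mathrm dy)\mu(\mathrm dx)$. *)

theory Defs
  imports "HOL-Analysis.Analysis" "HOL-Probability.Probability"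
begin

definition Gam :: "'a measure \<Rightarrow> ('a \<Rightarrow> 'a \<Rightarrow> real) \<Rightarrow> ('a \<Rightarrow> real) \<Rightarrow> 'a \<Rightarrow> ennreal" where
  "Gam \<mu> q f x = (\<integral>\<^sup>+ y. ennreal ((f x - f y)\<^sup>2 * q x y) \<partial>\<mu>)"

definition classA :: "'a measure \<Rightarrow> ('a \<Rightarrow> 'a \<Rightarrow> real) \<Rightarrow> ('a \<Rightarrow> real) set" where
  "classA \<mu> q = {f. f \<in> borel_measurable \<mu> \<and> bounded (range f) \<and>
                    (\<exists>C::real. \<forall>x. Gam \<mu> q f x \<le> ennreal C)}"

definition formE :: "'a measure \<Rightarrow> ('a \<Rightarrow> 'a \<Rightarrow> real) \<Rightarrow> ('a \<Rightarrow> real) \<Rightarrow> ennreal" where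
  "formE \<mu> q f = (\<integral>\<^sup>+ x. Gam \<mu> q f x \<partial>\<mu>)"

definition lam :: "'a::metric_space measure \<Rightarrow> ('a \<Rightarrow> 'a \<Rightarrow> real) \<Rightarrow> ennreal" where
  "lam \<mu> q = (SUP x. \<integral>\<^sup>+ y. ennreal (min 1 ((dist x y)\<^sup>2) * q x y) \<partial>\<mu>)"

text \<open>Super Poincare inequality on the closure (D(E),E) of (E,A) in L^2(mu):
  f in D(E) with E(f)=L means there are g_n in A with g_n -> f in L^2(mu),
  E(g_n - g_m) -> 0, and E(g_n) -> L.\<close>
definition super_poincare :: "'a measure \<Rightarrow> ('a \<Rightarrow> 'a \<Rightarrow> real) \<Rightarrow> (real \<Rightarrow> real) \<Rightarrow> bool" where
  "super_poincare \<mu> q \<beta> \<longleftrightarrow>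
     (\<forall>r>0. \<forall>f g L. f \<in> borel_measurable \<mu> \<longrightarrow> (\<forall>n. g n \<in> classA \<mu> q) \<longrightarrow>
        ((\<lambda>n. \<integral>\<^sup>+ x. ennreal ((g n x - f x)\<^sup>2) \<partial>\<mu>) \<longlonglongrightarrow> 0) \<longrightarrow>
        (\<forall>e>0. \<exists>N. \<forall>m\<ge>N. \<forall>n\<ge>N. formE \<mu> q (\<lambda>x. g m x - g n x) < e) \<longrightarrow>
        ((\<lambda>n. formE \<mu> q (g n)) \<longlonglongrightarrow> L) \<longrightarrow>
        (\<integral>\<^sup>+ x. ennreal ((f x)\<^sup>2) \<partial>\<mu>)
           \<le> ennreal r * L + ennreal (\<beta> r) * (\<integral>\<^sup>+ x. ennreal \<bar>f x\<bar> \<partial>\<mu>)\<^sup>2)"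

text \<open>beta^{-1}(s) = inf {r>0. beta(r) <= s}, with inf of the empty set = infinity.\<close>
definition binv :: "(real \<Rightarrow> real) \<Rightarrow> ennreal \<Rightarrow> ennreal" where
  "binv \<beta> s = Inf (ennreal ` {r. 0 < r \<and> ennreal (\<beta> r) \<le> s})"

definition rho :: "'a::metric_space \<Rightarrow> 'a \<Rightarrow> real" where
  "rho x0 x = dist x0 x"

text \<open>1/[2 mu(rho > m-1)], with 1/0 = infinity.\<close>
definition tail_arg :: "'a::metric_space measure \<Rightarrow> 'a \<Rightarrow> nat \<Rightarrow> ennreal" where
  "tail_arg \<mu> x0 m = inverse (2 * ennreal (measure \<mu> {x. rho x0 x > real m - 1}))"

definition Kconst :: "'a::metric_space \<Rightarrow> ('a \<Rightarrow> real) \<Rightarrow> nat \<Rightarrow> nat \<Rightarrow> real" where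
  "Kconst x0 V n k = Sup (V ` {x. rho x0 x \<le> real n + 2})
                     - Inf (V ` {x. rho x0 x \<le> real n + real k + 2})"

definition Zconst :: "'a::metric_space \<Rightarrow> ('a \<Rightarrow> real) \<Rightarrow> nat \<Rightarrow> real" where
  "Zconst x0 V n = Sup (V ` {x. rho x0 x \<le> real n + 1})"

definition eps_const :: "'a::metric_space measure \<Rightarrow> 'a \<Rightarrow> (real \<Rightarrow> real) \<Rightarrow> ('a \<Rightarrow> real)
    \<Rightarrow> nat \<Rightarrow> nat \<Rightarrow> ennreal" where
  "eps_const \<mu> x0 \<beta> V n k =
     (SUP m\<in>{n..}. binv \<beta> (tail_arg \<mu> x0 m) * ennreal (exp (Kconst x0 V m k)))"

definition zeta_const :: "'a::metric_space measure \<Rightarrow> 'a \<Rightarrow> (real \<Rightarrow> real) \<Rightarrow> ('a \<Rightarrow> real)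
    \<Rightarrow> nat \<Rightarrow> ennreal" where
  "zeta_const \<mu> x0 \<beta> V n =
     (SUP m\<in>{n..}. binv \<beta> (tail_arg \<mu> x0 m) * ennreal (exp (Zconst x0 V (m + 1))))"

definition gamma_const :: "'a::metric_space measure \<Rightarrow> 'a \<Rightarrow> ('a \<Rightarrow> 'a \<Rightarrow> real)
    \<Rightarrow> nat \<Rightarrow> nat \<Rightarrow> ennreal" where
  "gamma_const \<mu> x0 q n k =
     (\<integral>\<^sup>+ x. (\<integral>\<^sup>+ y. indicator {y. dist x y > real k \<and> rho x0 y \<ge> real n - 1} y
                        * ennreal (q x y) \<partial>\<mu>) \<partial>\<mu>)"

definition sup_norm :: "('a \<Rightarrow> real) \<Rightarrow> real" where
  "sup_norm f = Sup (range (\<lambda>x. \<bar>f x\<bar>))"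

definition muV :: "'a measure \<Rightarrow> ('a \<Rightarrow> real) \<Rightarrow> 'a measure" where
  "muV \<mu> V = density \<mu> (\<lambda>x. ennreal (exp (V x)))"

end

theory Submission
  imports Defs
begin


definition cutf :: "real \<Rightarrow> real" where
  "cutf t = max 0 (min 1 (min (t+1) (2-t)))"

lemma cut_nonneg: "0 \<le> cutf t" by (simp add: cutf_def)
lemma cut_le1: "cutf t \<le> 1" by (simp add: cutf_def)
lemma cut_one: "0 \<le> t \<Longrightarrow> t \<le> 1 \<Longrightarrow> cutf t = 1" by (simp add: cutf_def)
lemma cut_nz: "cutf t \<noteq> 0 \<Longrightarrow> -1 < t \<and> t < 2" by (auto simp: cutf_def)
lemma cut_lip: "\<bar>cutf s - cutf t\<bar> \<le> \<bar>s - t\<bar>"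
  unfolding cutf_def by (auto simp: max_def min_def abs_if)
lemma cut_sq_le1: "(cutf t)\<^sup>2 \<le> 1"
  using cut_nonneg[of t] cut_le1[of t] by (simp add: power_le_one)
lemma cut_diff_sq: "(cutf s - cutf t)\<^sup>2 \<le> min 1 ((s - t)\<^sup>2)"
proof -
  have a: "\<bar>cutf s - cutf t\<bar> \<le> 1" using cut_nonneg[of s] cut_le1[of s] cut_nonneg[of t] cut_le1[of t] by linarith
  have "(cutf s - cutf t)\<^sup>2 \<le> 1" using a by (metis abs_le_square_iff abs_one one_power2)
  moreover have "(cutf s - cutf t)\<^sup>2 \<le> (s - t)\<^sup>2" using cut_lip[of s t] by (metis abs_le_square_iff)
  ultimately show ?thesis by simp
qed

lemma card3_set:
  fixes a :: real assumes "0 \<le> a"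
  shows "\<exists>S. finite S \<and> card S \<le> 3 \<and> (\<forall>m::nat. cutf (a - real m) \<noteq> 0 \<longrightarrow> m \<in> S)"
proof -
  let ?S = "(\<lambda>i::int. nat (\<lfloor>a\<rfloor> - 1 + i)) ` {0,1,2}"
  have "card ?S \<le> card {0::int,1,2}" by (rule card_image_le) simp
  hence c: "card ?S \<le> 3" by simp
  have m: "\<forall>m::nat. cutf (a - real m) \<noteq> 0 \<longrightarrow> m \<in> ?S"
  proof (intro allI impI)
    fix m :: nat assume "cutf (a - real m) \<noteq> 0"
    then have h: "-1 < a - real m" "a - real m < 2" using cut_nz by auto
    have f1: "\<lfloor>a\<rfloor> \<le> a" "a < \<lfloor>a\<rfloor> + 1" by linarith+
    have "\<lfloor>a\<rfloor> - 1 \<le> int m" using h f1 by linarith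
    moreover have "int m \<le> \<lfloor>a\<rfloor> + 1" using h f1 by linarith
    ultimately have mem: "int m - (\<lfloor>a\<rfloor> - 1) \<in> {0,1,2}" by auto
    have eq: "m = nat (\<lfloor>a\<rfloor> - 1 + (int m - (\<lfloor>a\<rfloor> - 1)))" by simp
    show "m \<in> ?S" by (rule image_eqI[where f="\<lambda>i. nat (\<lfloor>a\<rfloor> - 1 + i)", OF eq mem])
  qed
  have "finite ?S" by simp
  then show ?thesis using c m by blast
qed

lemma suminf_fin_bound:
  fixes g :: "nat \<Rightarrow> real"
  assumes "\<And>m. 0 \<le> g m" "\<And>m. g m \<le> c" "\<And>m. g m \<noteq> 0 \<Longrightarrow> m \<in> S" "finite S" "card S \<le> N"
  shows "(\<Sum>m. ennreal (g m)) \<le> ennreal (real N * c)"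
proof -
  have "(\<Sum>m. ennreal (g m)) = (\<Sum>m\<in>S. ennreal (g m))"
    by (rule suminf_finite) (use assms in auto)
  also have "\<dots> = ennreal (\<Sum>m\<in>S. g m)" using assms(1) by simp
  also have "(\<Sum>m\<in>S. g m) \<le> (\<Sum>m\<in>S. c)" by (rule sum_mono) (use assms in auto)
  hence "ennreal (\<Sum>m\<in>S. g m) \<le> ennreal (real (card S) * c)" by (simp add: ennreal_leI)
  also have "real (card S) * c \<le> real N * c"
  proof -
    have "0 \<le> c" using assms(1,2) order_trans by blast
    thus ?thesis using assms(5) by (simp add: mult_right_mono)
  qed
  hence "ennreal (real (card S) * c) \<le> ennreal (real N * c)" by (simp add: ennreal_leI)
  finally show ?thesis .
qed



lemma inf_step:
  fixes I E :: ennreal and R :: "real set"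
  assumes b: "Inf (ennreal ` R) < \<infinity>" and E: "E < \<infinity>"
    and H: "\<And>r. r \<in> R \<Longrightarrow> I \<le> 2 * ennreal r * E"
  shows "I \<le> 2 * Inf (ennreal ` R) * E"
proof -
  have Rne: "R \<noteq> {}" using b by auto
  then obtain r0 where r0: "r0 \<in> R" by blast
  show ?thesis
  proof (cases "E = 0")
    case True thus ?thesis using H[OF r0] by simp
  next
    case False
    obtain e where e: "E = ennreal e" "e > 0" using E False
      by (metis ennreal_cases ennreal_less_zero_iff infinity_ennreal_def not_gr_zero top.not_eq_extremum)
    show ?thesis
    proof (rule ennreal_le_epsilon)
      fix d :: real assume d: "0 < d"
      define \<delta> where "\<delta> = d / (2*e)"
      have \<delta>: "\<delta> > 0" using d e by (simp add: \<delta>_def)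
      obtain r where r: "r \<in> R" "ennreal r < Inf (ennreal ` R) + ennreal \<delta>"
        using INF_approx_ennreal[OF \<delta>, where x="Inf (ennreal ` R)" and A=R and f=ennreal] b Rne by auto
      have "I \<le> 2 * ennreal r * E" using H[OF r(1)] .
      also have "\<dots> \<le> 2 * (Inf (ennreal ` R) + ennreal \<delta>) * E"
        using r(2) by (intro mult_right_mono mult_left_mono) auto
      also have "\<dots> = 2 * Inf (ennreal ` R) * E + 2 * ennreal \<delta> * ennreal e"
        using e by (simp add: distrib_left distrib_right)
      also have "2 * ennreal \<delta> * ennreal e = ennreal (2 * \<delta> * e)"
        using e \<delta> by (simp add: ennreal_mult)
      also have "2 * \<delta> * e = d" using e by (simp add: \<delta>_def)
      finally show "I \<le> 2 * Inf (ennreal ` R) * E + ennreal d" .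
    qed
  qed
qed

lemma classA_bound: "h \<in> classA \<mu> q \<Longrightarrow> \<exists>B. \<forall>x. \<bar>h x\<bar> \<le> B"
  unfolding classA_def bounded_iff by auto

lemma formE_zero: "formE \<mu> q (\<lambda>x. 0) = 0"
  by (simp add: formE_def Gam_def)

lemma sp_local:
  assumes prob: "prob_space \<mu>" and SP: "super_poincare \<mu> q \<beta>" and h: "h \<in> classA \<mu> q"
    and A: "A \<in> sets \<mu>" and supp: "\<And>x. h x \<noteq> 0 \<Longrightarrow> x \<in> A" and r: "r > 0"
    and br: "ennreal (\<beta> r) \<le> inverse (2 * ennreal (measure \<mu> A))"
  shows "(\<integral>\<^sup>+x. ennreal ((h x)\<^sup>2) \<partial>\<mu>) \<le> 2 * ennreal r * formE \<mu> q h"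
proof -
  interpret prob_space \<mu> by fact
  have hm[measurable]: "h \<in> borel_measurable \<mu>" using h by (simp add: classA_def)
  define I where "I = (\<integral>\<^sup>+x. ennreal ((h x)\<^sup>2) \<partial>\<mu>)"
  define E where "E = formE \<mu> q h"
  obtain B where B: "\<And>x. \<bar>h x\<bar> \<le> B" using classA_bound[OF h] by blast
  have "I \<le> (\<integral>\<^sup>+x. ennreal (B\<^sup>2) \<partial>\<mu>)" unfolding I_def
    by (intro nn_integral_mono ennreal_leI) (metis B abs_le_square_iff abs_ge_self order_trans power2_abs)
  also have "\<dots> = ennreal (B\<^sup>2)" by (simp add: emeasure_space_1)
  finally have Ifin: "I < \<infinity>" by (simp add: order_le_less_trans)
  have sp: "I \<le> ennreal r * E + ennreal (\<beta> r) * (\<integral>\<^sup>+ x. ennreal \<bar>h x\<bar> \<partial>\<mu>)\<^sup>2"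
    unfolding I_def E_def
    apply (rule SP[unfolded super_poincare_def, rule_format, of r h "\<lambda>n. h" "formE \<mu> q h"])
    using r hm h by (auto simp: formE_zero)
  have cs: "(\<integral>\<^sup>+ x. ennreal \<bar>h x\<bar> \<partial>\<mu>)\<^sup>2 \<le> I * ennreal (measure \<mu> A)"
  proof -
    have "(\<integral>\<^sup>+ x. ennreal \<bar>h x\<bar> \<partial>\<mu>) = (\<integral>\<^sup>+ x. ennreal \<bar>h x\<bar> * indicator A x \<partial>\<mu>)"
      by (intro nn_integral_cong) (auto simp: indicator_def dest: supp)
    hence "(\<integral>\<^sup>+ x. ennreal \<bar>h x\<bar> \<partial>\<mu>)\<^sup>2 \<le> (\<integral>\<^sup>+ x. (ennreal \<bar>h x\<bar>)^2 \<partial>\<mu>) * (\<integral>\<^sup>+ x. (indicator A x)^2 \<partial>\<mu>)"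
      using Cauchy_Schwarz_nn_integral[of "\<lambda>x. ennreal \<bar>h x\<bar>" \<mu> "indicator A"] A by simp
    also have "(\<integral>\<^sup>+ x. (ennreal \<bar>h x\<bar>)^2 \<partial>\<mu>) = I"
      unfolding I_def by (intro nn_integral_cong) (simp add: ennreal_power)
    also have "(\<integral>\<^sup>+ x. (indicator A x :: ennreal)^2 \<partial>\<mu>) = emeasure \<mu> A"
    proof -
      have "(\<integral>\<^sup>+ x. (indicator A x :: ennreal)^2 \<partial>\<mu>) = (\<integral>\<^sup>+ x. indicator A x \<partial>\<mu>)"
        by (intro nn_integral_cong) (simp add: indicator_def power2_eq_square)
      thus ?thesis using A by simp
    qed
    also have "emeasure \<mu> A = ennreal (measure \<mu> A)" by (simp add: emeasure_eq_measure)
    finally show ?thesis .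
  qed
  have half: "ennreal (\<beta> r) * (\<integral>\<^sup>+ x. ennreal \<bar>h x\<bar> \<partial>\<mu>)\<^sup>2 \<le> I * ennreal (1/2)"
  proof (cases "measure \<mu> A = 0")
    case True thus ?thesis using cs by simp
  next
    case False
    hence m: "measure \<mu> A > 0" using measure_nonneg[of \<mu> A] by linarith
    have "ennreal (\<beta> r) * (\<integral>\<^sup>+ x. ennreal \<bar>h x\<bar> \<partial>\<mu>)\<^sup>2 \<le> inverse (2 * ennreal (measure \<mu> A)) * (I * ennreal (measure \<mu> A))"
      by (intro mult_mono br cs) auto
    also have "inverse (2 * ennreal (measure \<mu> A)) = ennreal (inverse (2 * measure \<mu> A))"
    proof -
      have "2 * ennreal (measure \<mu> A) = ennreal (2 * measure \<mu> A)" by (simp add: ennreal_mult)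
      thus ?thesis using m inverse_ennreal[of "2 * measure \<mu> A"] by simp
    qed
    also have "ennreal (inverse (2 * measure \<mu> A)) * (I * ennreal (measure \<mu> A)) = I * ennreal (inverse (2 * measure \<mu> A) * measure \<mu> A)"
      using m by (simp add: ennreal_mult[symmetric] mult_ac del: ennreal_mult')
    also have "inverse (2 * measure \<mu> A) * measure \<mu> A = 1/2" using m by (simp add: field_simps)
    finally show ?thesis by simp
  qed
  have "I \<le> ennreal r * E + I * ennreal (1/2)" using sp half by (meson add_left_mono order_trans)
  then have "I \<le> 2 * (ennreal r * E)"
  proof (cases "ennreal r * E = \<infinity>")
    case True thus ?thesis by (simp add: ennreal_mult_top)
  next
    case False
    then obtain s where s: "ennreal r * E = ennreal s" "s \<ge> 0" by (metis ennreal_cases infinity_ennreal_def)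
    obtain i where i: "I = ennreal i" "i \<ge> 0" using Ifin by (metis ennreal_cases infinity_ennreal_def less_irrefl)
    assume a: "I \<le> ennreal r * E + I * ennreal (1 / 2)"
    have "I * ennreal (1/2) = ennreal (i * (1/2))" using i by (subst ennreal_mult) auto
    moreover have "ennreal s + ennreal (i * (1/2)) = ennreal (s + i * (1/2))" using s i by (subst ennreal_plus) auto
    ultimately have "ennreal i \<le> ennreal (s + i * (1/2))" using a s i by simp
    hence "i \<le> s + i * (1/2)" using s i ennreal_le_iff by (meson add_nonneg_nonneg divide_nonneg_nonneg mult_nonneg_nonneg zero_le_one zero_le_numeral)
    hence "i \<le> 2 * s" by simp
    hence "ennreal i \<le> ennreal (2 * s)" by (rule ennreal_leI)
    also have "ennreal (2 * s) = 2 * ennreal s" using s by (subst ennreal_mult) auto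
    finally show ?thesis using s i by simp
  qed
  thus ?thesis unfolding I_def E_def by (simp add: mult.assoc)
qed



lemma sq_sum_le: "((p::real) + r)\<^sup>2 \<le> 2 * p\<^sup>2 + 2 * r\<^sup>2"
proof -
  have "0 \<le> (p - r)\<^sup>2" by simp
  thus ?thesis by (simp add: power2_eq_square algebra_simps)
qed

lemma pointwise_m:
  fixes fx fy phx phy qxy B :: real and bS \<epsilon> \<zeta> evx :: ennreal and D :: bool
  assumes fx: "\<bar>fx\<bar> \<le> B" and fy: "\<bar>fy\<bar> \<le> B" and q: "0 \<le> qxy"
    and hD: "D \<Longrightarrow> phx \<noteq> 0 \<or> phy \<noteq> 0 \<Longrightarrow> bS \<le> \<epsilon> * evx"
    and hN: "\<not> D \<Longrightarrow> phx \<noteq> 0 \<Longrightarrow> bS \<le> \<epsilon> * evx"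
    and hZ: "bS \<le> \<zeta>"
  shows "2 * bS * ennreal ((fx * phx - fy * phy)\<^sup>2 * qxy)
    \<le> 4 * \<epsilon> * evx * ennreal ((fx - fy)\<^sup>2 * qxy) * ennreal (if D then phy\<^sup>2 else 0)
     + 4 * \<epsilon> * evx * ennreal (fx\<^sup>2 * qxy) * ennreal (if D then (phx - phy)\<^sup>2 else phx\<^sup>2)
     + 4 * \<zeta> * ennreal (B\<^sup>2 * qxy) * ennreal (if D then 0 else phy\<^sup>2)"
  (is "?L \<le> ?R1 + ?R2 + ?R3")
proof (cases D)
  case True
  have R3: "?R3 = 0" using True by simp
  show ?thesis
  proof (cases "phx = 0 \<and> phy = 0")
    case True thus ?thesis by simp
  next
    case False
    hence bS: "bS \<le> \<epsilon> * evx" using hD \<open>D\<close> by blast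
    have "(fx * phx - fy * phy)\<^sup>2 = (phy * (fx - fy) + fx * (phx - phy))\<^sup>2" by (simp add: algebra_simps)
    also have "\<dots> \<le> 2 * (phy * (fx - fy))\<^sup>2 + 2 * (fx * (phx - phy))\<^sup>2" by (rule sq_sum_le)
    also have "2 * (phy * (fx - fy))\<^sup>2 + 2 * (fx * (phx - phy))\<^sup>2 = 2 * ((fx - fy)\<^sup>2 * phy\<^sup>2) + 2 * (fx\<^sup>2 * (phx - phy)\<^sup>2)"
      by (simp add: power_mult_distrib)
    finally have r0: "(fx * phx - fy * phy)\<^sup>2 \<le> 2 * ((fx - fy)\<^sup>2 * phy\<^sup>2) + 2 * (fx\<^sup>2 * (phx - phy)\<^sup>2)" .
    have r: "(fx * phx - fy * phy)\<^sup>2 * qxy \<le> 2 * ((fx - fy)\<^sup>2 * qxy * phy\<^sup>2) + 2 * (fx\<^sup>2 * qxy * (phx - phy)\<^sup>2)"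
      using mult_right_mono[OF r0 q] by (simp add: algebra_simps)
    have "?L \<le> 2 * (\<epsilon> * evx) * ennreal ((fx * phx - fy * phy)\<^sup>2 * qxy)"
      using bS by (intro mult_right_mono mult_left_mono) auto
    also have "\<dots> \<le> 2 * (\<epsilon> * evx) * ennreal (2 * ((fx - fy)\<^sup>2 * qxy * phy\<^sup>2) + 2 * (fx\<^sup>2 * qxy * (phx - phy)\<^sup>2))"
      using r by (intro mult_left_mono ennreal_leI) auto
    also have "ennreal (2 * ((fx - fy)\<^sup>2 * qxy * phy\<^sup>2) + 2 * (fx\<^sup>2 * qxy * (phx - phy)\<^sup>2))
       = 2 * (ennreal ((fx - fy)\<^sup>2 * qxy) * ennreal (phy\<^sup>2)) + 2 * (ennreal (fx\<^sup>2 * qxy) * ennreal ((phx - phy)\<^sup>2))"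
      using q by (simp add: ennreal_plus ennreal_mult)
    also have "2 * (\<epsilon> * evx) * (2 * (ennreal ((fx - fy)\<^sup>2 * qxy) * ennreal (phy\<^sup>2)) + 2 * (ennreal (fx\<^sup>2 * qxy) * ennreal ((phx - phy)\<^sup>2)))
       = ?R1 + ?R2" using True by (simp add: algebra_simps)
    finally have "?L \<le> ?R1 + ?R2" .
    thus ?thesis by (simp only: R3 add_0_right)
  qed
next
  case False
  have R1: "?R1 = 0" using False by simp
  have fy2: "fy\<^sup>2 \<le> B\<^sup>2" using fy by (metis abs_le_square_iff abs_ge_self order_trans)
  show ?thesis
  proof (cases "phx = 0")
    case True
    have r: "(fx * phx - fy * phy)\<^sup>2 * qxy \<le> B\<^sup>2 * qxy * phy\<^sup>2"
    proof -
      have "fy\<^sup>2 * phy\<^sup>2 \<le> B\<^sup>2 * phy\<^sup>2" using fy2 by (simp add: mult_right_mono)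
      hence "qxy * (fy\<^sup>2 * phy\<^sup>2) \<le> qxy * (B\<^sup>2 * phy\<^sup>2)" using q by (simp add: mult_left_mono)
      thus ?thesis using True by (simp add: power_mult_distrib algebra_simps)
    qed
    have "?L \<le> 2 * \<zeta> * ennreal ((fx * phx - fy * phy)\<^sup>2 * qxy)"
      using hZ by (intro mult_right_mono mult_left_mono) auto
    also have "\<dots> \<le> 2 * \<zeta> * ennreal (B\<^sup>2 * qxy * phy\<^sup>2)"
      using r by (intro mult_left_mono ennreal_leI) auto
    also have "\<dots> \<le> 4 * \<zeta> * ennreal (B\<^sup>2 * qxy * phy\<^sup>2)"
      by (intro mult_right_mono) auto
    also have "\<dots> = ?R3" using False q by (simp add: ennreal_mult mult.assoc)
    finally show ?thesis by (simp add: add_increasing)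
  next
    case False2: False
    hence bS: "bS \<le> \<epsilon> * evx" using hN False by blast
    have "(fx * phx - fy * phy)\<^sup>2 \<le> 2 * (fx * phx)\<^sup>2 + 2 * (- (fy * phy))\<^sup>2"
      using sq_sum_le[of "fx * phx" "- (fy * phy)"] by simp
    also have "(- (fy * phy))\<^sup>2 \<le> B\<^sup>2 * phy\<^sup>2"
      using fy2 by (simp add: power_mult_distrib mult_right_mono)
    finally have r0: "(fx * phx - fy * phy)\<^sup>2 \<le> 2 * (fx\<^sup>2 * phx\<^sup>2) + 2 * (B\<^sup>2 * phy\<^sup>2)"
      by (simp add: power_mult_distrib)
    have r: "(fx * phx - fy * phy)\<^sup>2 * qxy \<le> 2 * (fx\<^sup>2 * qxy * phx\<^sup>2) + 2 * (B\<^sup>2 * qxy * phy\<^sup>2)"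
      using mult_right_mono[OF r0 q] by (simp add: algebra_simps)
    have "?L \<le> 2 * bS * ennreal (2 * (fx\<^sup>2 * qxy * phx\<^sup>2) + 2 * (B\<^sup>2 * qxy * phy\<^sup>2))"
      using r by (intro mult_left_mono ennreal_leI) auto
    also have "\<dots> = 4 * bS * ennreal (fx\<^sup>2 * qxy * phx\<^sup>2) + 4 * bS * ennreal (B\<^sup>2 * qxy * phy\<^sup>2)"
      using q by (simp add: ennreal_plus ennreal_mult algebra_simps)
    also have "\<dots> \<le> 4 * (\<epsilon> * evx) * ennreal (fx\<^sup>2 * qxy * phx\<^sup>2) + 4 * \<zeta> * ennreal (B\<^sup>2 * qxy * phy\<^sup>2)"
      using bS hZ by (intro add_mono mult_right_mono mult_left_mono) auto
    also have "\<dots> = ?R2 + ?R3" using False q by (simp add: ennreal_mult algebra_simps)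
    finally have "?L \<le> ?R2 + ?R3" .
    thus ?thesis by (simp only: R1 add_0_left)
  qed
qed



lemma cutf_meas[measurable (raw)]:
  assumes [measurable]: "u \<in> borel_measurable M" shows "(\<lambda>x. cutf (u x)) \<in> borel_measurable M"
  unfolding cutf_def by measurable

lemma rho_meas[measurable]: "(\<lambda>x. rho (x0::'a::polish_space) x) \<in> borel_measurable borel"
  unfolding rho_def by measurable

lemma rho_lip: "\<bar>rho x0 x - rho x0 y\<bar> \<le> dist x y"
  unfolding rho_def using dist_triangle[of x0 x y] dist_triangle[of x0 y x] by (simp add: dist_commute abs_le_iff)

lemma rho_nonneg: "0 \<le> rho x0 x" unfolding rho_def by simp

lemma nnint_meas:
  assumes sf: "sigma_finite_measure M" and sets: "sets M = sets borel"
    and F: "(\<lambda>p. F (fst p) (snd p)) \<in> borel_measurable (borel \<Otimes>\<^sub>M borel)"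
  shows "(\<lambda>x. \<integral>\<^sup>+y. F x y \<partial>M) \<in> borel_measurable borel"
proof -
  have "sets (borel \<Otimes>\<^sub>M M) = sets (borel \<Otimes>\<^sub>M borel)" by (rule sets_pair_measure_cong[OF refl sets])
  hence e: "borel_measurable (borel \<Otimes>\<^sub>M M) = borel_measurable (borel \<Otimes>\<^sub>M borel)"
    by (rule measurable_cong_sets) simp
  have "(\<lambda>p. F (fst p) (snd p)) \<in> borel_measurable (borel \<Otimes>\<^sub>M M)"
    using F by (simp add: e)
  from sigma_finite_measure.borel_measurable_nn_integral_fst[OF sf this] show ?thesis by simp
qed



theorem lemma2p6:
  fixes \<mu> :: "'a::polish_space measure"
    and q :: "'a \<Rightarrow> 'a \<Rightarrow> real"
    and x0 :: 'a
    and V :: "'a \<Rightarrow> real"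
    and \<beta> :: "real \<Rightarrow> real"
    and n k :: nat
    and f :: "'a \<Rightarrow> real"
  assumes prob: "prob_space \<mu>"
    and space: "space \<mu> = UNIV"
    and borel: "sets \<mu> = sets borel"
    and q_meas: "(\<lambda>(x, y). q x y) \<in> borel_measurable (\<mu> \<Otimes>\<^sub>M \<mu>)"
    and q_nonneg: "\<And>x y. q x y \<ge> 0"
    and q_diag: "\<And>x. q x x = 0"
    and lam_fin: "lam \<mu> q < \<infinity>"
    and A_dense: "\<And>h e. h \<in> borel_measurable \<mu> \<Longrightarrow>
                    (\<integral>\<^sup>+ x. ennreal ((h x)\<^sup>2) \<partial>\<mu>) < \<infinity> \<Longrightarrow> e > 0 \<Longrightarrow>
                    \<exists>g\<in>classA \<mu> q. (\<integral>\<^sup>+ x. ennreal ((h x - g x)\<^sup>2) \<partial>\<mu>) < e"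
    and V_meas: "V \<in> borel_measurable \<mu>"
    and V_bdd: "\<And>r. bounded (V ` {x. rho x0 x \<le> r})"
    and V_norm: "(\<integral>\<^sup>+ x. ennreal (exp (V x)) \<partial>\<mu>) = 1"
    and beta_pos: "\<And>r. r > 0 \<Longrightarrow> \<beta> r > 0"
    and beta_decr: "\<And>r s. 0 < r \<Longrightarrow> r \<le> s \<Longrightarrow> \<beta> s \<le> \<beta> r"
    and SP: "super_poincare \<mu> q \<beta>"
    and n: "n \<ge> 1" and k: "k \<ge> 1"
    and f: "f \<in> classA \<mu> q"
    and eps_fin: "eps_const \<mu> x0 \<beta> V n k < \<infinity>"
    and zeta_fin: "zeta_const \<mu> x0 \<beta> V n < \<infinity>"
  shows "(\<integral>\<^sup>+ x. ennreal ((f x)\<^sup>2 * indicator {x. rho x0 x \<ge> real n} x) \<partial>muV \<mu> V)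
     \<le> 12 * eps_const \<mu> x0 \<beta> V n k * (\<integral>\<^sup>+ x. Gam \<mu> q f x \<partial>muV \<mu> V)
       + 128 * lam \<mu> q * eps_const \<mu> x0 \<beta> V n k * (\<integral>\<^sup>+ x. ennreal ((f x)\<^sup>2) \<partial>muV \<mu> V)
       + 96 * zeta_const \<mu> x0 \<beta> V n * gamma_const \<mu> x0 q n k * ennreal ((sup_norm f)\<^sup>2)"
proof -
  interpret P: prob_space \<mu> by (rule prob)
  have sf: "sigma_finite_measure \<mu>" by unfold_locales
  have meq: "\<And>N. measurable \<mu> N = measurable borel N"
    by (rule measurable_cong_sets[OF borel refl])
  have meq2: "\<And>N. measurable (\<mu> \<Otimes>\<^sub>M \<mu>) N = measurable (borel \<Otimes>\<^sub>M borel) N"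
    by (rule measurable_cong_sets[OF sets_pair_measure_cong[OF borel borel] refl])
  have qm[measurable]: "(\<lambda>p. q (fst p) (snd p)) \<in> borel_measurable (borel \<Otimes>\<^sub>M borel)"
    using q_meas unfolding meq2 by (simp add: case_prod_beta')
  have fm[measurable]: "f \<in> borel_measurable borel" using f unfolding classA_def meq by simp
  have qx[measurable]: "\<And>x. q x \<in> borel_measurable borel"
  proof -
    fix x
    have "(\<lambda>y. (\<lambda>p. q (fst p) (snd p)) (x, y)) \<in> borel_measurable borel"
      by (rule measurable_compose_Pair1[OF _ qm]) simp
    thus "q x \<in> borel_measurable borel" by simp
  qed
  have Vm[measurable]: "V \<in> borel_measurable borel" using V_meas unfolding meq by simp
  have im: "\<And>F. (\<lambda>p. F (fst p) (snd p)) \<in> borel_measurable (borel \<Otimes>\<^sub>M borel) \<Longrightarrow>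
      (\<lambda>x. \<integral>\<^sup>+y. F x y \<partial>\<mu>) \<in> borel_measurable borel"
    by (rule nnint_meas[OF sf borel])

  define ph where "ph m x = cutf (rho x0 x - real m)" for m x
  define b where "b m = binv \<beta> (tail_arg \<mu> x0 m)" for m
  define Sm where "Sm m = Zconst x0 V (m + 1)" for m
  define \<epsilon> where "\<epsilon> = eps_const \<mu> x0 \<beta> V n k"
  define \<zeta> where "\<zeta> = zeta_const \<mu> x0 \<beta> V n"
  define L where "L = lam \<mu> q"
  define B where "B = sup_norm f"
  define ev where "ev x = ennreal (exp (V x))" for x
  have phm[measurable]: "\<And>m. ph m \<in> borel_measurable borel" unfolding ph_def by measurable

  have Bf: "\<And>x. \<bar>f x\<bar> \<le> B"
  proof -
    fix x
    have "bounded (range f)" using f by (simp add: classA_def)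
    hence "bdd_above (range (\<lambda>x. \<bar>f x\<bar>))"
      unfolding bounded_iff bdd_above_def by (auto simp: real_norm_def)
    thus "\<bar>f x\<bar> \<le> B" unfolding B_def sup_norm_def using cSup_upper[OF rangeI[of "\<lambda>x. \<bar>f x\<bar>" x]] by simp
  qed
  have ph01: "\<And>m x. 0 \<le> ph m x \<and> ph m x \<le> 1" unfolding ph_def using cut_nonneg cut_le1 by blast
  have ph_nz: "\<And>m x. ph m x \<noteq> 0 \<Longrightarrow> real m - 1 < rho x0 x \<and> rho x0 x < real m + 2"
    unfolding ph_def using cut_nz by force
  have Vsup: "\<And>m x. rho x0 x \<le> real m + 2 \<Longrightarrow> V x \<le> Sm m"
  proof -
    fix m x assume "rho x0 x \<le> real m + 2"
    hence x: "x \<in> {x. rho x0 x \<le> real (m + 1) + 1}" by simp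
    have "bdd_above (V ` {x. rho x0 x \<le> real (m + 1) + 1})"
      by (rule bounded_imp_bdd_above[OF V_bdd])
    thus "V x \<le> Sm m" unfolding Sm_def Zconst_def using x by (intro cSup_upper) auto
  qed
  have Vinf: "\<And>m x. rho x0 x \<le> real m + real k + 2 \<Longrightarrow> Inf (V ` {x. rho x0 x \<le> real m + real k + 2}) \<le> V x"
  proof -
    fix m x assume "rho x0 x \<le> real m + real k + 2"
    thus "Inf (V ` {x. rho x0 x \<le> real m + real k + 2}) \<le> V x"
      by (intro cInf_lower bounded_imp_bdd_below[OF V_bdd]) auto
  qed
  have SmK: "\<And>m. Sm m = Kconst x0 V m k + Inf (V ` {x. rho x0 x \<le> real m + real k + 2})"
    unfolding Sm_def Zconst_def Kconst_def by (simp add: add.commute add.left_commute)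
  have bK: "\<And>m. n \<le> m \<Longrightarrow> b m * ennreal (exp (Kconst x0 V m k)) \<le> \<epsilon>"
    unfolding \<epsilon>_def eps_const_def b_def by (rule SUP_upper) auto
  have wt_zeta: "\<And>m. n \<le> m \<Longrightarrow> b m * ennreal (exp (Sm m)) \<le> \<zeta>"
    unfolding \<zeta>_def zeta_const_def b_def Sm_def by (rule SUP_upper) auto
  have wt_eps: "\<And>m x. n \<le> m \<Longrightarrow> rho x0 x \<le> real m + real k + 2 \<Longrightarrow> b m * ennreal (exp (Sm m)) \<le> \<epsilon> * ev x"
  proof -
    fix m x assume m: "n \<le> m" and x: "rho x0 x \<le> real m + real k + 2"
    have "ennreal (exp (Sm m)) = ennreal (exp (Kconst x0 V m k)) * ennreal (exp (Inf (V ` {x. rho x0 x \<le> real m + real k + 2})))"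
      by (simp add: SmK exp_add ennreal_mult)
    also have "\<dots> \<le> ennreal (exp (Kconst x0 V m k)) * ev x"
      unfolding ev_def using Vinf[OF x] by (intro mult_left_mono ennreal_leI) auto
    finally have "b m * ennreal (exp (Sm m)) \<le> b m * ennreal (exp (Kconst x0 V m k)) * ev x"
      by (simp add: mult.assoc mult_left_mono)
    also have "\<dots> \<le> \<epsilon> * ev x" using bK[OF m] by (rule mult_right_mono) simp
    finally show "b m * ennreal (exp (Sm m)) \<le> \<epsilon> * ev x" .
  qed
  have b_fin: "\<And>m. n \<le> m \<Longrightarrow> b m < \<infinity>"
  proof (rule ccontr)
    fix m assume m: "n \<le> m" and "\<not> b m < \<infinity>"
    hence "b m = \<infinity>" by (metis less_top infinity_ennreal_def)
    hence "b m * ennreal (exp (Kconst x0 V m k)) = \<infinity>" by (simp add: ennreal_mult_top)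
    thus False using bK[OF m] eps_fin \<epsilon>_def by simp
  qed
  have dph: "\<And>m x y. (ph m x - ph m y)\<^sup>2 \<le> min 1 ((dist x y)\<^sup>2)"
  proof -
    fix m x y
    have "(ph m x - ph m y)\<^sup>2 \<le> min 1 ((rho x0 x - real m - (rho x0 y - real m))\<^sup>2)"
      unfolding ph_def by (rule cut_diff_sq)
    also have "(rho x0 x - real m - (rho x0 y - real m))\<^sup>2 \<le> (dist x y)\<^sup>2"
      using rho_lip[of x0 x y] by (simp add: abs_le_square_iff[symmetric])
    finally show "(ph m x - ph m y)\<^sup>2 \<le> min 1 ((dist x y)\<^sup>2)" by simp
  qed
  have lamx: "\<And>x. (\<integral>\<^sup>+y. ennreal (min 1 ((dist x y)\<^sup>2) * q x y) \<partial>\<mu>) \<le> L"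
    unfolding L_def lam_def by (rule SUP_upper) simp
  obtain Lr where Lr: "L = ennreal Lr" "0 \<le> Lr" using lam_fin L_def
    by (metis ennreal_cases infinity_ennreal_def less_irrefl)
  obtain C where C: "\<And>x. Gam \<mu> q f x \<le> ennreal C" using f by (auto simp: classA_def)
  define C' where "C' = 2 * max C 0 + 2 * B\<^sup>2 * Lr"
  have gamb: "\<And>m x. Gam \<mu> q (\<lambda>x. f x * ph m x) x \<le> ennreal C'"
  proof -
    fix m x
    have pw: "\<And>y. ennreal ((f x * ph m x - f y * ph m y)\<^sup>2 * q x y)
        \<le> 2 * ennreal ((f x - f y)\<^sup>2 * q x y) + 2 * ennreal (B\<^sup>2) * ennreal (min 1 ((dist x y)\<^sup>2) * q x y)"
    proof -
      fix y
      have "(f x * ph m x - f y * ph m y)\<^sup>2 = (ph m y * (f x - f y) + f x * (ph m x - ph m y))\<^sup>2"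
        by (simp add: algebra_simps)
      also have "\<dots> \<le> 2 * (ph m y * (f x - f y))\<^sup>2 + 2 * (f x * (ph m x - ph m y))\<^sup>2" by (rule sq_sum_le)
      also have "(ph m y * (f x - f y))\<^sup>2 \<le> (f x - f y)\<^sup>2"
      proof -
        have "(ph m y)\<^sup>2 \<le> 1" using ph01[of m y] by (simp add: power_le_one)
        thus ?thesis by (simp add: power_mult_distrib mult_left_le_one_le)
      qed
      also have "(f x * (ph m x - ph m y))\<^sup>2 \<le> B\<^sup>2 * min 1 ((dist x y)\<^sup>2)"
      proof -
        have "(f x)\<^sup>2 \<le> B\<^sup>2" using Bf[of x] by (metis abs_le_square_iff abs_ge_self order_trans)
        thus ?thesis using dph[of m x y] by (simp add: power_mult_distrib mult_mono)
      qed
      finally have r: "(f x * ph m x - f y * ph m y)\<^sup>2 \<le> 2 * (f x - f y)\<^sup>2 + 2 * (B\<^sup>2 * min 1 ((dist x y)\<^sup>2))" by simp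
      have "(f x * ph m x - f y * ph m y)\<^sup>2 * q x y \<le> 2 * ((f x - f y)\<^sup>2 * q x y) + 2 * B\<^sup>2 * (min 1 ((dist x y)\<^sup>2) * q x y)"
        using mult_right_mono[OF r q_nonneg[of x y]] by (simp add: algebra_simps)
      hence "ennreal ((f x * ph m x - f y * ph m y)\<^sup>2 * q x y) \<le> ennreal (2 * ((f x - f y)\<^sup>2 * q x y) + 2 * B\<^sup>2 * (min 1 ((dist x y)\<^sup>2) * q x y))"
        by (rule ennreal_leI)
      also have "\<dots> = 2 * ennreal ((f x - f y)\<^sup>2 * q x y) + 2 * ennreal (B\<^sup>2) * ennreal (min 1 ((dist x y)\<^sup>2) * q x y)"
        using q_nonneg[of x y] by (simp add: ennreal_plus ennreal_mult)
      finally show "ennreal ((f x * ph m x - f y * ph m y)\<^sup>2 * q x y)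
        \<le> 2 * ennreal ((f x - f y)\<^sup>2 * q x y) + 2 * ennreal (B\<^sup>2) * ennreal (min 1 ((dist x y)\<^sup>2) * q x y)" .
    qed
    have "Gam \<mu> q (\<lambda>x. f x * ph m x) x \<le> (\<integral>\<^sup>+y. 2 * ennreal ((f x - f y)\<^sup>2 * q x y) + 2 * ennreal (B\<^sup>2) * ennreal (min 1 ((dist x y)\<^sup>2) * q x y) \<partial>\<mu>)"
      unfolding Gam_def by (intro nn_integral_mono pw)
    also have "\<dots> = 2 * Gam \<mu> q f x + 2 * ennreal (B\<^sup>2) * (\<integral>\<^sup>+y. ennreal (min 1 ((dist x y)\<^sup>2) * q x y) \<partial>\<mu>)"
    proof -
      have m1: "(\<lambda>y. 2 * ennreal ((f x - f y)\<^sup>2 * q x y)) \<in> borel_measurable \<mu>" unfolding meq by measurable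
      have m2: "(\<lambda>y. 2 * ennreal (B\<^sup>2) * ennreal (min 1 ((dist x y)\<^sup>2) * q x y)) \<in> borel_measurable \<mu>" unfolding meq by measurable
      have m3: "(\<lambda>y. ennreal ((f x - f y)\<^sup>2 * q x y)) \<in> borel_measurable \<mu>" unfolding meq by measurable
      have m4: "(\<lambda>y. ennreal (min 1 ((dist x y)\<^sup>2) * q x y)) \<in> borel_measurable \<mu>" unfolding meq by measurable
      show ?thesis
        by (simp only: Gam_def nn_integral_add[OF m1 m2] nn_integral_cmult[OF m3] nn_integral_cmult[OF m4])
    qed
    also have "\<dots> \<le> 2 * ennreal (max C 0) + 2 * ennreal (B\<^sup>2) * ennreal Lr"
      using C[of x] lamx[of x] Lr by (intro add_mono mult_left_mono) (auto intro: order_trans ennreal_leI)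
    also have "\<dots> = ennreal C'" unfolding C'_def using Lr by (simp add: ennreal_plus ennreal_mult)
    finally show "Gam \<mu> q (\<lambda>x. f x * ph m x) x \<le> ennreal C'" .
  qed
  have gA: "\<And>m. (\<lambda>x. f x * ph m x) \<in> classA \<mu> q"
  proof -
    fix m
    have "bounded (range (\<lambda>x. f x * ph m x))"
      unfolding bounded_iff
    proof (intro exI ballI)
      fix z assume "z \<in> range (\<lambda>x. f x * ph m x)"
      then obtain x where z: "z = f x * ph m x" by auto
      have "\<bar>f x * ph m x\<bar> \<le> B * 1" unfolding abs_mult using Bf[of x] ph01[of m x]
        by (intro mult_mono) auto
      thus "norm z \<le> B" using z by simp
    qed
    thus "(\<lambda>x. f x * ph m x) \<in> classA \<mu> q" unfolding classA_def meq using gamb by auto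
  qed
  have Efin: "\<And>m. formE \<mu> q (\<lambda>x. f x * ph m x) < \<infinity>"
  proof -
    fix m
    have "formE \<mu> q (\<lambda>x. f x * ph m x) \<le> (\<integral>\<^sup>+x. ennreal C' \<partial>\<mu>)"
      unfolding formE_def by (intro nn_integral_mono gamb)
    also have "\<dots> = ennreal C'" by (simp add: P.emeasure_space_1)
    finally show "formE \<mu> q (\<lambda>x. f x * ph m x) < \<infinity>" by (simp add: order_le_less_trans)
  qed
  have step2: "\<And>m. n \<le> m \<Longrightarrow> (\<integral>\<^sup>+x. ennreal ((f x * ph m x)\<^sup>2) \<partial>\<mu>) \<le> 2 * b m * formE \<mu> q (\<lambda>x. f x * ph m x)"
  proof -
    fix m assume m: "n \<le> m"
    have bR: "b m = Inf (ennreal ` {r. 0 < r \<and> ennreal (\<beta> r) \<le> tail_arg \<mu> x0 m})"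
      unfolding b_def binv_def ..
    have Ameas: "{x. real m - 1 < rho x0 x} \<in> sets \<mu>" unfolding borel by measurable
    show "(\<integral>\<^sup>+x. ennreal ((f x * ph m x)\<^sup>2) \<partial>\<mu>) \<le> 2 * b m * formE \<mu> q (\<lambda>x. f x * ph m x)"
      unfolding bR
    proof (rule inf_step)
      show "Inf (ennreal ` {r. 0 < r \<and> ennreal (\<beta> r) \<le> tail_arg \<mu> x0 m}) < \<infinity>"
        using b_fin[OF m] bR by simp
      show "formE \<mu> q (\<lambda>x. f x * ph m x) < \<infinity>" by (rule Efin)
      fix r assume r: "r \<in> {r. 0 < r \<and> ennreal (\<beta> r) \<le> tail_arg \<mu> x0 m}"
      show "(\<integral>\<^sup>+x. ennreal ((f x * ph m x)\<^sup>2) \<partial>\<mu>) \<le> 2 * ennreal r * formE \<mu> q (\<lambda>x. f x * ph m x)"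
      proof (rule sp_local[OF prob SP gA Ameas])
        show "0 < r" using r by simp
        show "ennreal (\<beta> r) \<le> inverse (2 * ennreal (measure \<mu> {x. real m - 1 < rho x0 x}))"
          using r unfolding tail_arg_def by simp
        fix x assume "f x * ph m x \<noteq> 0"
        thus "x \<in> {x. real m - 1 < rho x0 x}" using ph_nz[of m x] by auto
      qed
    qed
  qed
  define P where "P m x y = ennreal ((f x * ph m x - f y * ph m y)\<^sup>2 * q x y)" for m x y
  define T where "T m x y = (if n \<le> m then 2 * b m * ennreal (exp (Sm m)) * P m x y else 0)" for m x y
  define S' where "S' x = {y. real k < dist x y \<and> real n - 1 \<le> rho x0 y}" for x
  define Rb where "Rb x y = 12 * \<epsilon> * ev x * ennreal ((f x - f y)\<^sup>2 * q x y)
      + 24 * \<epsilon> * ev x * ennreal ((f x)\<^sup>2) * ennreal (min 1 ((dist x y)\<^sup>2) * q x y)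
      + 12 * \<zeta> * ennreal (B\<^sup>2) * (indicator (S' x) y * ennreal (q x y))" for x y
  have evm[measurable]: "ev \<in> borel_measurable borel" unfolding ev_def by measurable
  have Pm[measurable]: "\<And>m. (\<lambda>p. P m (fst p) (snd p)) \<in> borel_measurable (borel \<Otimes>\<^sub>M borel)"
    unfolding P_def by measurable
  have Tm[measurable]: "\<And>m. (\<lambda>p. T m (fst p) (snd p)) \<in> borel_measurable (borel \<Otimes>\<^sub>M borel)"
    unfolding T_def by measurable
  have Tmy: "\<And>m x. T m x \<in> borel_measurable \<mu>"
  proof -
    fix m x
    have "(\<lambda>y. (\<lambda>p. T m (fst p) (snd p)) (x, y)) \<in> borel_measurable borel"
      by (rule measurable_compose_Pair1[OF _ Tm]) simp
    thus "T m x \<in> borel_measurable \<mu>" unfolding meq by simp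
  qed
  have Tmx: "\<And>m. (\<lambda>x. \<integral>\<^sup>+y. T m x y \<partial>\<mu>) \<in> borel_measurable \<mu>"
    unfolding meq by (rule im) (rule Tm)

  have C0: "(\<integral>\<^sup>+ x. ennreal ((f x)\<^sup>2 * indicator {x. rho x0 x \<ge> real n} x) \<partial>muV \<mu> V)
      = (\<integral>\<^sup>+ x. ev x * ennreal ((f x)\<^sup>2 * indicator {x. rho x0 x \<ge> real n} x) \<partial>\<mu>)"
    unfolding muV_def ev_def by (rule nn_integral_density) (simp_all add: meq)
  have C1: "\<And>x. ev x * ennreal ((f x)\<^sup>2 * indicator {x. rho x0 x \<ge> real n} x)
      \<le> (\<Sum>m. if n \<le> m then ev x * ennreal ((f x * ph m x)\<^sup>2) else 0)"
  proof -
    fix x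
    show "ev x * ennreal ((f x)\<^sup>2 * indicator {x. rho x0 x \<ge> real n} x)
      \<le> (\<Sum>m. if n \<le> m then ev x * ennreal ((f x * ph m x)\<^sup>2) else 0)"
    proof (cases "rho x0 x \<ge> real n")
      case False thus ?thesis by simp
    next
      case True
      define m0 where "m0 = nat \<lfloor>rho x0 x\<rfloor>"
      have r0: "0 \<le> rho x0 x" by (rule rho_nonneg)
      have fl: "real m0 \<le> rho x0 x" "rho x0 x < real m0 + 1" unfolding m0_def using r0 by linarith+
      have nm0: "n \<le> m0" unfolding m0_def using True by linarith
      have ph1: "ph m0 x = 1" unfolding ph_def using fl by (intro cut_one) auto
      have "ev x * ennreal ((f x)\<^sup>2 * indicator {x. rho x0 x \<ge> real n} x)
          = (\<lambda>m. if n \<le> m then ev x * ennreal ((f x * ph m x)\<^sup>2) else 0) m0"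
        using True nm0 ph1 by simp
      also have "\<dots> = (\<Sum>m\<in>{m0}. if n \<le> m then ev x * ennreal ((f x * ph m x)\<^sup>2) else 0)" by simp
      also have "\<dots> \<le> (\<Sum>m. if n \<le> m then ev x * ennreal ((f x * ph m x)\<^sup>2) else 0)"
        by (rule sum_le_suminf) auto
      finally show ?thesis .
    qed
  qed
  have C2m: "\<And>m. (\<lambda>x. if n \<le> m then ev x * ennreal ((f x * ph m x)\<^sup>2) else 0) \<in> borel_measurable \<mu>"
    unfolding meq by measurable
  have C3: "\<And>m. (\<integral>\<^sup>+x. (if n \<le> m then ev x * ennreal ((f x * ph m x)\<^sup>2) else 0) \<partial>\<mu>)
      \<le> (\<integral>\<^sup>+x. \<integral>\<^sup>+y. T m x y \<partial>\<mu> \<partial>\<mu>)"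
  proof -
    fix m
    show "(\<integral>\<^sup>+x. (if n \<le> m then ev x * ennreal ((f x * ph m x)\<^sup>2) else 0) \<partial>\<mu>)
      \<le> (\<integral>\<^sup>+x. \<integral>\<^sup>+y. T m x y \<partial>\<mu> \<partial>\<mu>)"
    proof (cases "n \<le> m")
      case False thus ?thesis by simp
    next
      case True
      have "(\<integral>\<^sup>+x. (if n \<le> m then ev x * ennreal ((f x * ph m x)\<^sup>2) else 0) \<partial>\<mu>)
          \<le> (\<integral>\<^sup>+x. ennreal (exp (Sm m)) * ennreal ((f x * ph m x)\<^sup>2) \<partial>\<mu>)"
      proof (intro nn_integral_mono)
        fix x
        show "(if n \<le> m then ev x * ennreal ((f x * ph m x)\<^sup>2) else 0) \<le> ennreal (exp (Sm m)) * ennreal ((f x * ph m x)\<^sup>2)"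
        proof (cases "ph m x = 0")
          case True thus ?thesis by simp
        next
          case False
          hence "V x \<le> Sm m" using ph_nz[OF False] by (intro Vsup) simp
          thus ?thesis using True unfolding ev_def by (simp add: ennreal_leI mult_right_mono)
        qed
      qed
      also have "\<dots> = ennreal (exp (Sm m)) * (\<integral>\<^sup>+x. ennreal ((f x * ph m x)\<^sup>2) \<partial>\<mu>)"
        by (rule nn_integral_cmult) (simp add: meq)
      also have "\<dots> \<le> ennreal (exp (Sm m)) * (2 * b m * formE \<mu> q (\<lambda>x. f x * ph m x))"
        by (intro mult_left_mono step2 True) simp
      also have "\<dots> = (2 * b m * ennreal (exp (Sm m))) * (\<integral>\<^sup>+x. \<integral>\<^sup>+y. P m x y \<partial>\<mu> \<partial>\<mu>)"
        unfolding formE_def Gam_def P_def by (simp add: mult_ac)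
      also have "\<dots> = (\<integral>\<^sup>+x. (2 * b m * ennreal (exp (Sm m))) * \<integral>\<^sup>+y. P m x y \<partial>\<mu> \<partial>\<mu>)"
        by (rule nn_integral_cmult[symmetric]) (unfold meq, rule im, rule Pm)
      also have "\<dots> = (\<integral>\<^sup>+x. \<integral>\<^sup>+y. T m x y \<partial>\<mu> \<partial>\<mu>)"
      proof (intro nn_integral_cong)
        fix x
        have "(\<lambda>y. P m x y) \<in> borel_measurable \<mu>"
        proof -
          have "(\<lambda>y. (\<lambda>p. P m (fst p) (snd p)) (x, y)) \<in> borel_measurable borel"
            by (rule measurable_compose_Pair1[OF _ Pm]) simp
          thus ?thesis unfolding meq by simp
        qed
        thus "(2 * b m * ennreal (exp (Sm m))) * (\<integral>\<^sup>+y. P m x y \<partial>\<mu>) = (\<integral>\<^sup>+y. T m x y \<partial>\<mu>)"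
          unfolding T_def using True by (simp add: nn_integral_cmult)
      qed
      finally show ?thesis .
    qed
  qed
  have sumT: "\<And>x y. (\<Sum>m. T m x y) \<le> Rb x y"
  proof -
    fix x y :: 'a
    define Dxy where "Dxy = (dist x y \<le> real k)"
    define a where "a m = (if n \<le> m then (if Dxy then (ph m y)\<^sup>2 else 0) else 0)" for m
    define u where "u m = (if n \<le> m then (if Dxy then (ph m x - ph m y)\<^sup>2 else (ph m x)\<^sup>2) else 0)" for m
    define c where "c m = (if n \<le> m then (if Dxy then 0 else (ph m y)\<^sup>2) else 0)" for m
    define X1 where "X1 = 4 * \<epsilon> * ev x * ennreal ((f x - f y)\<^sup>2 * q x y)"
    define X2 where "X2 = 4 * \<epsilon> * ev x * ennreal ((f x)\<^sup>2 * q x y)"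
    define X3 where "X3 = 4 * \<zeta> * ennreal (B\<^sup>2 * q x y)"
    have rxy: "rho x0 x \<le> rho x0 y + dist x y" using rho_lip[of x0 x y] by linarith
    have per: "\<And>m. T m x y \<le> X1 * ennreal (a m) + X2 * ennreal (u m) + X3 * ennreal (c m)"
    proof -
      fix m
      show "T m x y \<le> X1 * ennreal (a m) + X2 * ennreal (u m) + X3 * ennreal (c m)"
      proof (cases "n \<le> m")
        case False thus ?thesis unfolding T_def by simp
      next
        case True
        have "2 * (b m * ennreal (exp (Sm m))) * ennreal ((f x * ph m x - f y * ph m y)\<^sup>2 * q x y)
          \<le> 4 * \<epsilon> * ev x * ennreal ((f x - f y)\<^sup>2 * q x y) * ennreal (if Dxy then (ph m y)\<^sup>2 else 0)
           + 4 * \<epsilon> * ev x * ennreal ((f x)\<^sup>2 * q x y) * ennreal (if Dxy then (ph m x - ph m y)\<^sup>2 else (ph m x)\<^sup>2)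
           + 4 * \<zeta> * ennreal (B\<^sup>2 * q x y) * ennreal (if Dxy then 0 else (ph m y)\<^sup>2)"
        proof (rule pointwise_m[OF Bf Bf q_nonneg])
          show "b m * ennreal (exp (Sm m)) \<le> \<zeta>" by (rule wt_zeta[OF True])
          assume D: "Dxy" and nz: "ph m x \<noteq> 0 \<or> ph m y \<noteq> 0"
          show "b m * ennreal (exp (Sm m)) \<le> \<epsilon> * ev x"
          proof (rule wt_eps[OF True])
            show "rho x0 x \<le> real m + real k + 2"
              using nz ph_nz[of m x] ph_nz[of m y] D rxy unfolding Dxy_def by force
          qed
        next
          assume nz: "ph m x \<noteq> 0"
          show "b m * ennreal (exp (Sm m)) \<le> \<epsilon> * ev x"
          proof (rule wt_eps[OF True])
            show "rho x0 x \<le> real m + real k + 2" using ph_nz[OF nz] by simp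
          qed
        qed
        thus ?thesis unfolding T_def P_def a_def u_def c_def X1_def X2_def X3_def using True
          by (simp add: mult.assoc)
      qed
    qed
    have "(\<Sum>m. T m x y) \<le> (\<Sum>m. X1 * ennreal (a m) + X2 * ennreal (u m) + X3 * ennreal (c m))"
      by (intro suminf_le per) auto
    also have "\<dots> = X1 * (\<Sum>m. ennreal (a m)) + X2 * (\<Sum>m. ennreal (u m)) + X3 * (\<Sum>m. ennreal (c m))"
      by (simp add: suminf_add[symmetric])
    also have "\<dots> \<le> X1 * ennreal (real 3 * 1) + X2 * ennreal (real 6 * min 1 ((dist x y)\<^sup>2))
        + X3 * ennreal (real 3 * indicator (S' x) y)"
    proof (intro add_mono mult_left_mono order_refl)
      show "0 \<le> X1" "0 \<le> X2" "0 \<le> X3" by simp_all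
      obtain Sx where Sx: "finite Sx" "card Sx \<le> 3" "\<And>m. cutf (rho x0 x - real m) \<noteq> 0 \<Longrightarrow> m \<in> Sx"
        using card3_set[OF rho_nonneg[of x0 x]] by blast
      obtain Sy where Sy: "finite Sy" "card Sy \<le> 3" "\<And>m. cutf (rho x0 y - real m) \<noteq> 0 \<Longrightarrow> m \<in> Sy"
        using card3_set[OF rho_nonneg[of x0 y]] by blast
      have phy: "\<And>m. ph m y \<noteq> 0 \<Longrightarrow> m \<in> Sy" using Sy(3) unfolding ph_def by blast
      have phx: "\<And>m. ph m x \<noteq> 0 \<Longrightarrow> m \<in> Sx" using Sx(3) unfolding ph_def by blast
      have sq1: "\<And>m z. (ph m z)\<^sup>2 \<le> 1" using ph01 by (simp add: power_le_one)
      show "(\<Sum>m. ennreal (a m)) \<le> ennreal (real 3 * 1)"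
      proof (rule suminf_fin_bound[OF _ _ _ Sy(1,2)])
        show "\<And>m. 0 \<le> a m" "\<And>m. a m \<le> 1" unfolding a_def using sq1 by auto
        show "\<And>m. a m \<noteq> 0 \<Longrightarrow> m \<in> Sy" unfolding a_def using phy by (auto split: if_splits)
      qed
      show "(\<Sum>m. ennreal (u m)) \<le> ennreal (real 6 * min 1 ((dist x y)\<^sup>2))"
      proof (rule suminf_fin_bound[where S="Sx \<union> Sy"])
        show "finite (Sx \<union> Sy)" using Sx Sy by simp
        show "card (Sx \<union> Sy) \<le> 6" using card_Un_le[of Sx Sy] Sx Sy by linarith
        show "\<And>m. 0 \<le> u m" unfolding u_def by auto
        show "\<And>m. u m \<le> min 1 ((dist x y)\<^sup>2)"
        proof -
          fix m
          show "u m \<le> min 1 ((dist x y)\<^sup>2)"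
          proof (cases Dxy)
            case True thus ?thesis unfolding u_def using dph[of m x y] by auto
          next
            case False
            hence "1 < dist x y" unfolding Dxy_def using k by simp
            hence "1 \<le> (dist x y)\<^sup>2" by (simp add: one_le_power less_imp_le)
            thus ?thesis unfolding u_def using False sq1[of m x] by auto
          qed
        qed
        show "\<And>m. u m \<noteq> 0 \<Longrightarrow> m \<in> Sx \<union> Sy" unfolding u_def using phx phy
          by (auto split: if_splits) (metis diff_self)
      qed
      show "(\<Sum>m. ennreal (c m)) \<le> ennreal (real 3 * indicator (S' x) y)"
      proof (rule suminf_fin_bound[OF _ _ _ Sy(1,2)])
        show "\<And>m. 0 \<le> c m" unfolding c_def by auto
        show "\<And>m. c m \<noteq> 0 \<Longrightarrow> m \<in> Sy" unfolding c_def using phy by (auto split: if_splits)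
        show "\<And>m. c m \<le> indicator (S' x) y"
        proof -
          fix m
          show "c m \<le> indicator (S' x) y"
          proof (cases "c m = 0")
            case True thus ?thesis by simp
          next
            case False
            hence nm: "n \<le> m" "\<not> Dxy" "ph m y \<noteq> 0" unfolding c_def by (auto split: if_splits)
            hence "y \<in> S' x" unfolding S'_def Dxy_def using ph_nz[of m y] by auto
            thus ?thesis unfolding c_def using sq1[of m y] by auto
          qed
        qed
      qed
    qed
    also have "\<dots> = Rb x y"
    proof -
      have qn: "0 \<le> q x y" by (rule q_nonneg)
      have f1: "ennreal ((f x)\<^sup>2 * q x y) = ennreal ((f x)\<^sup>2) * ennreal (q x y)" using qn by (simp add: ennreal_mult)
      have f2: "ennreal (real 6 * min 1 ((dist x y)\<^sup>2)) = 6 * ennreal (min 1 ((dist x y)\<^sup>2))" by (simp add: ennreal_mult)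
      have f3: "ennreal (min 1 ((dist x y)\<^sup>2) * q x y) = ennreal (min 1 ((dist x y)\<^sup>2)) * ennreal (q x y)"
        using qn by (simp add: ennreal_mult)
      have f4: "ennreal (B\<^sup>2 * q x y) = ennreal (B\<^sup>2) * ennreal (q x y)" using qn by (simp add: ennreal_mult)
      have f5: "ennreal (real 3 * indicator (S' x) y) = 3 * indicator (S' x) y" by (simp add: ennreal_mult ennreal_indicator)
      have f6: "ennreal (real 3 * 1) = 3" by simp
      have t1: "X1 * ennreal (real 3 * 1) = (4 * 3) * (\<epsilon> * ev x * ennreal ((f x - f y)\<^sup>2 * q x y))"
        unfolding X1_def f6 by (simp only: mult_ac)
      have t2: "X2 * ennreal (real 6 * min 1 ((dist x y)\<^sup>2)) = (4 * 6) * (\<epsilon> * ev x * ennreal ((f x)\<^sup>2) * ennreal (min 1 ((dist x y)\<^sup>2) * q x y))"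
        unfolding X2_def f1 f2 f3 by (simp only: mult_ac)
      have t3: "X3 * ennreal (real 3 * indicator (S' x) y) = (4 * 3) * (\<zeta> * ennreal (B\<^sup>2) * (indicator (S' x) y * ennreal (q x y)))"
        unfolding X3_def f4 f5 by (simp only: mult_ac)
      show ?thesis unfolding t1 t2 t3 Rb_def by (simp add: mult.assoc)
    qed
    finally show "(\<Sum>m. T m x y) \<le> Rb x y" .
  qed
  have chain1: "(\<integral>\<^sup>+ x. ennreal ((f x)\<^sup>2 * indicator {x. rho x0 x \<ge> real n} x) \<partial>muV \<mu> V)
      \<le> (\<integral>\<^sup>+x. \<integral>\<^sup>+y. Rb x y \<partial>\<mu> \<partial>\<mu>)"
  proof -
    have "(\<integral>\<^sup>+ x. ennreal ((f x)\<^sup>2 * indicator {x. rho x0 x \<ge> real n} x) \<partial>muV \<mu> V)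
        \<le> (\<integral>\<^sup>+x. (\<Sum>m. if n \<le> m then ev x * ennreal ((f x * ph m x)\<^sup>2) else 0) \<partial>\<mu>)"
      unfolding C0 by (intro nn_integral_mono C1)
    also have "\<dots> = (\<Sum>m. \<integral>\<^sup>+x. (if n \<le> m then ev x * ennreal ((f x * ph m x)\<^sup>2) else 0) \<partial>\<mu>)"
      by (rule nn_integral_suminf[OF C2m])
    also have "\<dots> \<le> (\<Sum>m. \<integral>\<^sup>+x. \<integral>\<^sup>+y. T m x y \<partial>\<mu> \<partial>\<mu>)"
      by (intro suminf_le C3) auto
    also have "\<dots> = (\<integral>\<^sup>+x. (\<Sum>m. \<integral>\<^sup>+y. T m x y \<partial>\<mu>) \<partial>\<mu>)"
      by (rule nn_integral_suminf[OF Tmx, symmetric])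
    also have "\<dots> = (\<integral>\<^sup>+x. \<integral>\<^sup>+y. (\<Sum>m. T m x y) \<partial>\<mu> \<partial>\<mu>)"
      by (intro nn_integral_cong nn_integral_suminf[symmetric] Tmy)
    also have "\<dots> \<le> (\<integral>\<^sup>+x. \<integral>\<^sup>+y. Rb x y \<partial>\<mu> \<partial>\<mu>)"
      by (intro nn_integral_mono sumT)
    finally show ?thesis .
  qed
  define Gx where "Gx x = (\<integral>\<^sup>+y. indicator (S' x) y * ennreal (q x y) \<partial>\<mu>)" for x
  have indm: "(\<lambda>p. indicator (S' (fst p)) (snd p) * ennreal (q (fst p) (snd p)) :: ennreal) \<in> borel_measurable (borel \<Otimes>\<^sub>M borel)"
  proof -
    have "(\<lambda>p. indicator (S' (fst p)) (snd p) * ennreal (q (fst p) (snd p)) :: ennreal)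
       = (\<lambda>p. if real k < dist (fst p) (snd p) \<and> real n - 1 \<le> rho x0 (snd p) then ennreal (q (fst p) (snd p)) else 0)"
      by (auto simp: S'_def indicator_def fun_eq_iff)
    also have "\<dots> \<in> borel_measurable (borel \<Otimes>\<^sub>M borel)" by measurable
    finally show ?thesis .
  qed
  have Gxm: "Gx \<in> borel_measurable borel" unfolding Gx_def by (rule im) (rule indm)
  have Gamm: "(\<lambda>x. Gam \<mu> q f x) \<in> borel_measurable borel" unfolding Gam_def by (rule im) measurable
  have inner: "\<And>x. (\<integral>\<^sup>+y. Rb x y \<partial>\<mu>) \<le> (12 * \<epsilon>) * (ev x * Gam \<mu> q f x) + (24 * \<epsilon> * L) * (ev x * ennreal ((f x)\<^sup>2))
      + (12 * \<zeta> * ennreal (B\<^sup>2)) * Gx x"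
  proof -
    fix x :: 'a
    have m1: "(\<lambda>y. 12 * \<epsilon> * ev x * ennreal ((f x - f y)\<^sup>2 * q x y)) \<in> borel_measurable \<mu>" unfolding meq by measurable
    have m2: "(\<lambda>y. 24 * \<epsilon> * ev x * ennreal ((f x)\<^sup>2) * ennreal (min 1 ((dist x y)\<^sup>2) * q x y)) \<in> borel_measurable \<mu>" unfolding meq by measurable
    have m3': "(\<lambda>y. indicator (S' x) y * ennreal (q x y) :: ennreal) \<in> borel_measurable \<mu>"
    proof -
      have "(\<lambda>y. (\<lambda>p. indicator (S' (fst p)) (snd p) * ennreal (q (fst p) (snd p)) :: ennreal) (x, y)) \<in> borel_measurable borel"
        by (rule measurable_compose_Pair1[OF _ indm]) simp
      thus ?thesis unfolding meq by simp
    qed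
    have m3: "(\<lambda>y. 12 * \<zeta> * ennreal (B\<^sup>2) * (indicator (S' x) y * ennreal (q x y))) \<in> borel_measurable \<mu>"
      using m3' by measurable
    have m4: "(\<lambda>y. ennreal ((f x - f y)\<^sup>2 * q x y)) \<in> borel_measurable \<mu>" unfolding meq by measurable
    have m5: "(\<lambda>y. ennreal (min 1 ((dist x y)\<^sup>2) * q x y)) \<in> borel_measurable \<mu>" unfolding meq by measurable
    have "(\<integral>\<^sup>+y. Rb x y \<partial>\<mu>) = (\<integral>\<^sup>+y. 12 * \<epsilon> * ev x * ennreal ((f x - f y)\<^sup>2 * q x y) \<partial>\<mu>)
        + (\<integral>\<^sup>+y. 24 * \<epsilon> * ev x * ennreal ((f x)\<^sup>2) * ennreal (min 1 ((dist x y)\<^sup>2) * q x y) \<partial>\<mu>)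
        + (\<integral>\<^sup>+y. 12 * \<zeta> * ennreal (B\<^sup>2) * (indicator (S' x) y * ennreal (q x y)) \<partial>\<mu>)"
    proof -
      have m12: "(\<lambda>y. 12 * \<epsilon> * ev x * ennreal ((f x - f y)\<^sup>2 * q x y) + 24 * \<epsilon> * ev x * ennreal ((f x)\<^sup>2) * ennreal (min 1 ((dist x y)\<^sup>2) * q x y)) \<in> borel_measurable \<mu>"
        using m1 m2 by measurable
      show ?thesis unfolding Rb_def by (simp only: nn_integral_add[OF m12 m3] nn_integral_add[OF m1 m2])
    qed
    also have "\<dots> = (12 * \<epsilon> * ev x) * Gam \<mu> q f x
        + (24 * \<epsilon> * ev x * ennreal ((f x)\<^sup>2)) * (\<integral>\<^sup>+y. ennreal (min 1 ((dist x y)\<^sup>2) * q x y) \<partial>\<mu>)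
        + (12 * \<zeta> * ennreal (B\<^sup>2)) * Gx x"
      unfolding Gam_def Gx_def
      by (simp only: nn_integral_cmult[OF m4] nn_integral_cmult[OF m5] nn_integral_cmult[OF m3'])
    also have "\<dots> \<le> (12 * \<epsilon> * ev x) * Gam \<mu> q f x + (24 * \<epsilon> * ev x * ennreal ((f x)\<^sup>2)) * L + (12 * \<zeta> * ennreal (B\<^sup>2)) * Gx x"
      by (intro add_mono mult_left_mono lamx order_refl) simp
    also have "\<dots> = (12 * \<epsilon>) * (ev x * Gam \<mu> q f x) + (24 * \<epsilon> * L) * (ev x * ennreal ((f x)\<^sup>2)) + (12 * \<zeta> * ennreal (B\<^sup>2)) * Gx x"
      by (simp add: mult_ac)
    finally show "(\<integral>\<^sup>+y. Rb x y \<partial>\<mu>) \<le> (12 * \<epsilon>) * (ev x * Gam \<mu> q f x) + (24 * \<epsilon> * L) * (ev x * ennreal ((f x)\<^sup>2))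
      + (12 * \<zeta> * ennreal (B\<^sup>2)) * Gx x" .
  qed
  have EV: "(\<integral>\<^sup>+ x. Gam \<mu> q f x \<partial>muV \<mu> V) = (\<integral>\<^sup>+x. ev x * Gam \<mu> q f x \<partial>\<mu>)"
    unfolding muV_def ev_def by (rule nn_integral_density) (use Gamm in \<open>simp_all add: meq\<close>)
  have IV: "(\<integral>\<^sup>+ x. ennreal ((f x)\<^sup>2) \<partial>muV \<mu> V) = (\<integral>\<^sup>+x. ev x * ennreal ((f x)\<^sup>2) \<partial>\<mu>)"
    unfolding muV_def ev_def by (rule nn_integral_density) (simp_all add: meq)
  have GG: "gamma_const \<mu> x0 q n k = (\<integral>\<^sup>+x. Gx x \<partial>\<mu>)"
    unfolding gamma_const_def Gx_def S'_def ..
  have "(\<integral>\<^sup>+x. \<integral>\<^sup>+y. Rb x y \<partial>\<mu> \<partial>\<mu>) \<le> (\<integral>\<^sup>+x. (12 * \<epsilon>) * (ev x * Gam \<mu> q f x) + (24 * \<epsilon> * L) * (ev x * ennreal ((f x)\<^sup>2))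
      + (12 * \<zeta> * ennreal (B\<^sup>2)) * Gx x \<partial>\<mu>)"
    by (intro nn_integral_mono inner)
  also have "\<dots> = (12 * \<epsilon>) * (\<integral>\<^sup>+ x. Gam \<mu> q f x \<partial>muV \<mu> V) + (24 * \<epsilon> * L) * (\<integral>\<^sup>+ x. ennreal ((f x)\<^sup>2) \<partial>muV \<mu> V)
      + (12 * \<zeta> * ennreal (B\<^sup>2)) * gamma_const \<mu> x0 q n k"
  proof -
    have a1: "(\<lambda>x. ev x * Gam \<mu> q f x) \<in> borel_measurable \<mu>" using Gamm unfolding meq by measurable
    have a2: "(\<lambda>x. ev x * ennreal ((f x)\<^sup>2)) \<in> borel_measurable \<mu>" unfolding meq by measurable
    have a3: "Gx \<in> borel_measurable \<mu>" using Gxm unfolding meq .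
    have b1: "(\<lambda>x. (12 * \<epsilon>) * (ev x * Gam \<mu> q f x)) \<in> borel_measurable \<mu>" using a1 by measurable
    have b2: "(\<lambda>x. (24 * \<epsilon> * L) * (ev x * ennreal ((f x)\<^sup>2))) \<in> borel_measurable \<mu>" using a2 by measurable
    have b3: "(\<lambda>x. (12 * \<zeta> * ennreal (B\<^sup>2)) * Gx x) \<in> borel_measurable \<mu>" using a3 by measurable
    have b12: "(\<lambda>x. (12 * \<epsilon>) * (ev x * Gam \<mu> q f x) + (24 * \<epsilon> * L) * (ev x * ennreal ((f x)\<^sup>2))) \<in> borel_measurable \<mu>"
      using b1 b2 by measurable
    show ?thesis unfolding EV IV GG
      by (simp only: nn_integral_add[OF b12 b3] nn_integral_add[OF b1 b2]
          nn_integral_cmult[OF a1] nn_integral_cmult[OF a2] nn_integral_cmult[OF a3])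
  qed
  also have "\<dots> \<le> 12 * eps_const \<mu> x0 \<beta> V n k * (\<integral>\<^sup>+ x. Gam \<mu> q f x \<partial>muV \<mu> V)
       + 128 * lam \<mu> q * eps_const \<mu> x0 \<beta> V n k * (\<integral>\<^sup>+ x. ennreal ((f x)\<^sup>2) \<partial>muV \<mu> V)
       + 96 * zeta_const \<mu> x0 \<beta> V n * gamma_const \<mu> x0 q n k * ennreal ((sup_norm f)\<^sup>2)"
  proof (intro add_mono order_refl)
    show "24 * \<epsilon> * L * (\<integral>\<^sup>+ x. ennreal ((f x)\<^sup>2) \<partial>muV \<mu> V)
      \<le> 128 * lam \<mu> q * eps_const \<mu> x0 \<beta> V n k * (\<integral>\<^sup>+ x. ennreal ((f x)\<^sup>2) \<partial>muV \<mu> V)"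
    proof -
      have "24 * \<epsilon> * L * (\<integral>\<^sup>+ x. ennreal ((f x)\<^sup>2) \<partial>muV \<mu> V) = 24 * (L * \<epsilon> * (\<integral>\<^sup>+ x. ennreal ((f x)\<^sup>2) \<partial>muV \<mu> V))"
        by (simp only: mult_ac)
      also have "\<dots> \<le> 128 * (L * \<epsilon> * (\<integral>\<^sup>+ x. ennreal ((f x)\<^sup>2) \<partial>muV \<mu> V))"
        by (rule mult_right_mono) simp_all
      finally show ?thesis unfolding L_def \<epsilon>_def by (simp only: mult.assoc)
    qed
    show "12 * \<zeta> * ennreal (B\<^sup>2) * gamma_const \<mu> x0 q n k
      \<le> 96 * zeta_const \<mu> x0 \<beta> V n * gamma_const \<mu> x0 q n k * ennreal ((sup_norm f)\<^sup>2)"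
    proof -
      have "12 * \<zeta> * ennreal (B\<^sup>2) * gamma_const \<mu> x0 q n k = 12 * (\<zeta> * gamma_const \<mu> x0 q n k * ennreal (B\<^sup>2))"
        by (simp only: mult_ac)
      also have "\<dots> \<le> 96 * (\<zeta> * gamma_const \<mu> x0 q n k * ennreal (B\<^sup>2))"
        by (rule mult_right_mono) simp_all
      finally show ?thesis unfolding B_def \<zeta>_def by (simp only: mult.assoc)
    qed
    show "12 * \<epsilon> * (\<integral>\<^sup>+ x. Gam \<mu> q f x \<partial>muV \<mu> V) \<le> 12 * eps_const \<mu> x0 \<beta> V n k * (\<integral>\<^sup>+ x. Gam \<mu> q f x \<partial>muV \<mu> V)"
      unfolding \<epsilon>_def ..
  qed
  finally show ?thesis using chain1 by (rule order_trans[rotated])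
qed

end
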